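(* Let $n,k\in\mathbb{N}$ with $n\ge 2k$. A function $f\colon\binom{[n]}{k}\to\mathbb{R}$ satisfies $W^k(f)=0$ if and only if there exists $h\colon\binom{[n]}{k-1}\to\mathbb{R}$ such that for all $R\in\binom{[n]}{k}$, $f(R)=\sum_{S\subset R,\,|S|=k-1}h(S)$.
   Context: An $s$-permutation of $V$ is a sequence of $s$ distinct elements of $V$. For $k,r\in\mathbb{N}$, a finite set $V$ with $|V|\ge 2k\ge 2r$ and $f\colon\binom{V}{k}\to\mathbb{R}$, the level-$r$ weight of $f$ is \[ W^r(f)=\left(\mathbb{E}_{(a_1,b_1,\ldots,a_r,b_r)}\Big(\mathbb{E}_{R}\,(-1)^{|R\cap\{b_1,\ldots,b_r\}|}f(R)\Big)^2\right)^{1/2}, \] where $(a_1,b_1,\ldots,a_r,b_r)$ is a uniformly random $2r$-permutation of $V$, and, given it, $R$ is a uniformly random $k$-subset of $V$ with $|R\cap\{a_i,b_i\}|=1$ for each $i\in[r]$. Here $V=[n]$ and $r=k$. *)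

theory Defs
  imports Complex_Main
begin

definition perms :: "'a set \<Rightarrow> nat \<Rightarrow> 'a list set" where
  "perms V s = {xs. length xs = s \<and> distinct xs \<and> set xs \<subseteq> V}"

text \<open>For a 2r-permutation xs = (a_1,b_1,...,a_r,b_r) (0-indexed: a_i = xs!(2i), b_i = xs!(2i+1)),
  the k-subsets R of V with |R \<inter> {a_i,b_i}| = 1 for all i.\<close>
definition compat_sets :: "'a set \<Rightarrow> nat \<Rightarrow> nat \<Rightarrow> 'a list \<Rightarrow> 'a set set" where
  "compat_sets V k r xs = {R. R \<subseteq> V \<and> card R = k \<and>
      (\<forall>i<r. card (R \<inter> {xs ! (2*i), xs ! (2*i+1)}) = 1)}"

definition b_set :: "nat \<Rightarrow> 'a list \<Rightarrow> 'a set" where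
  "b_set r xs = {xs ! (2*i+1) | i. i < r}"

definition inner_exp :: "'a set \<Rightarrow> nat \<Rightarrow> nat \<Rightarrow> ('a set \<Rightarrow> real) \<Rightarrow> 'a list \<Rightarrow> real" where
  "inner_exp V k r f xs =
     (\<Sum>R\<in>compat_sets V k r xs. (-1) ^ card (R \<inter> b_set r xs) * f R) / real (card (compat_sets V k r xs))"

definition level_weight :: "'a set \<Rightarrow> nat \<Rightarrow> nat \<Rightarrow> ('a set \<Rightarrow> real) \<Rightarrow> real" where
  "level_weight V k r f =
     sqrt ((\<Sum>xs\<in>perms V (2*r). (inner_exp V k r f xs)^2) / real (card (perms V (2*r))))"

end

theory Submission
  imports Defs
begin

fun cs :: "('a set \<Rightarrow> real) \<Rightarrow> 'a set \<Rightarrow> 'a list \<Rightarrow> real" where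
  "cs f T (a # b # xs) = cs f (insert a T) xs - cs f (insert b T) xs"
| "cs f T xs = f T"

lemma cs_shift: "cs f (insert v T) xs = cs (\<lambda>X. f (insert v X)) T xs"
  by (induction f T xs rule: cs.induct) (simp_all add: insert_commute)

lemma cs_diff: "cs (\<lambda>X. f X - g X) T xs = cs f T xs - cs g T xs"
  by (induction f T xs rule: cs.induct) simp_all

lemma cs_zero: "cs (\<lambda>X. 0) T xs = 0"
  by (induction "\<lambda>X::'a set. 0::real" T xs rule: cs.induct) simp_all

lemma cs_sumlin: "cs (\<lambda>X. \<Sum>S\<in>F. c S * \<phi> S X) T xs = (\<Sum>S\<in>F. c S * cs (\<phi> S) T xs)"
proof (induction "\<lambda>X. \<Sum>S\<in>F. c S * \<phi> S X" T xs rule: cs.induct)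
  case (1 T a b xs)
  then show ?case by (simp add: sum_subtractf right_diff_distrib)
qed simp_all

lemma len2: "length xs = 2 * Suc m \<Longrightarrow> \<exists>a b ys. xs = a # b # ys \<and> length ys = 2 * m"
  by (cases xs; cases "tl xs") auto

lemma cs_cong:
  assumes "distinct xs" "length xs = 2*m" "finite T" "T \<inter> set xs = {}"
    "\<And>Y. T \<subseteq> Y \<Longrightarrow> Y \<subseteq> T \<union> set xs \<Longrightarrow> card Y = card T + m \<Longrightarrow> f Y = g Y"
  shows "cs f T xs = cs g T xs"
  using assms
proof (induction m arbitrary: xs T)
  case 0
  then show ?case by simp
next
  case (Suc m)
  obtain a b ys where xs: "xs = a # b # ys" "length ys = 2*m" using len2[OF Suc.prems(2)] by blast
  have 1: "cs f (insert a T) ys = cs g (insert a T) ys"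
    apply (rule Suc.IH)
    using Suc.prems xs by (auto simp: card_insert_if intro!: Suc.prems(5))
  have 2: "cs f (insert b T) ys = cs g (insert b T) ys"
    apply (rule Suc.IH)
    using Suc.prems xs by (auto simp: card_insert_if intro!: Suc.prems(5))
  show ?case using 1 2 xs by simp
qed

lemma cs_ind_zero:
  assumes "distinct xs" "length xs = 2*m" "finite T" "T \<inter> set xs = {}" "finite S" "card S < m"
  shows "cs (\<lambda>R. if S \<subseteq> R then 1 else 0) T xs = 0"
  using assms
proof (induction m arbitrary: xs T S)
  case 0
  then show ?case by simp
next
  case (Suc m)
  obtain a b ys where xs: "xs = a # b # ys" "length ys = 2*m" using len2[OF Suc.prems(2)] by blast
  have ab: "a \<noteq> b" "a \<notin> T" "b \<notin> T" "a \<notin> set ys" "b \<notin> set ys" "distinct ys" "T \<inter> set ys = {}"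
    using Suc.prems xs by auto
  have e: "cs (\<lambda>R. if S \<subseteq> R then 1 else 0) T xs =
     cs (\<lambda>R. if S \<subseteq> R then 1 else 0) (insert a T) ys - cs (\<lambda>R. if S \<subseteq> R then 1 else 0) (insert b T) ys"
    using xs by simp
  have z: "cs (\<lambda>R. if S \<subseteq> R then 1 else 0) (insert x T) ys = 0"
    if "x \<in> {a,b}" "y \<in> {a,b}" "x \<noteq> y" "y \<in> S" for x y
  proof -
    have "cs (\<lambda>R. if S \<subseteq> R then 1 else 0) (insert x T) ys = cs (\<lambda>R. 0) (insert x T) ys"
      apply (rule cs_cong[OF ab(6) xs(2)])
      using that ab Suc.prems by auto
    then show ?thesis by (simp add: cs_zero)
  qed
  have o: "cs (\<lambda>R. if S \<subseteq> R then 1 else 0) (insert x T) ys = 0"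
    if "x \<in> {a,b}" "x \<in> S" for x
  proof -
    have "card S > 0" using that Suc.prems(5) by (auto simp: card_gt_0_iff)
    have "cs (\<lambda>R. if S \<subseteq> R then 1 else 0) (insert x T) ys = cs (\<lambda>R. if S - {x} \<subseteq> R then 1 else 0) (insert x T) ys"
      apply (rule cs_cong[OF ab(6) xs(2)])
      using that ab Suc.prems by auto
    also have "\<dots> = 0"
      apply (rule Suc.IH[OF ab(6) xs(2)])
      using that ab Suc.prems \<open>card S > 0\<close> by auto
    finally show ?thesis .
  qed
  show ?case
  proof (cases "a \<in> S \<or> b \<in> S")
    case True
    then show ?thesis
    proof
      assume "a \<in> S"
      then show ?thesis using e z[of b a] o[of a] ab by simp
    next
      assume "b \<in> S"
      then show ?thesis using e z[of a b] o[of b] ab by simp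
    qed
  next
    case False
    have "\<And>x. x \<in> {a,b} \<Longrightarrow> cs (\<lambda>R. if S \<subseteq> R then 1 else 0) (insert x T) ys = cs (\<lambda>R. if S \<subseteq> R then 1 else 0) T ys"
      using False by (auto simp: cs_shift subset_insert)
    then show ?thesis using e by simp
  qed
qed

lemma up_vanish:
  assumes "distinct xs" "length xs = 2*m" "finite T" "T \<inter> set xs = {}" "d < m"
  shows "cs (\<lambda>R. \<Sum>S\<in>{S. S \<subseteq> R \<and> card S = d}. h S) T xs = 0"
proof -
  define W where "W = T \<union> set xs"
  define F where "F = {S. S \<subseteq> W \<and> card S = d}"
  have fW: "finite W" using assms W_def by auto
  have fF: "finite F" unfolding F_def using fW by (auto intro: finite_subset[of _ "Pow W"])
  have "cs (\<lambda>R. \<Sum>S\<in>{S. S \<subseteq> R \<and> card S = d}. h S) T xs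
      = cs (\<lambda>R. \<Sum>S\<in>F. h S * (if S \<subseteq> R then 1 else 0)) T xs"
  proof (rule cs_cong[OF assms(1,2,3,4)])
    fix Y assume Y: "Y \<subseteq> T \<union> set xs"
    have "(\<Sum>S\<in>F. h S * (if S \<subseteq> Y then 1 else 0)) = (\<Sum>S\<in>F. if S \<subseteq> Y then h S else 0)"
      by (rule sum.cong) auto
    also have "\<dots> = (\<Sum>S\<in>{S\<in>F. S \<subseteq> Y}. h S)"
      using fF by (simp add: sum.inter_filter)
    also have "{S\<in>F. S \<subseteq> Y} = {S. S \<subseteq> Y \<and> card S = d}"
      using Y unfolding F_def W_def by auto
    finally show "(\<Sum>S\<in>{S. S \<subseteq> Y \<and> card S = d}. h S) = (\<Sum>S\<in>F. h S * (if S \<subseteq> Y then 1 else 0))" by simp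
  qed
  also have "\<dots> = (\<Sum>S\<in>F. h S * cs (\<lambda>R. if S \<subseteq> R then 1 else 0) T xs)"
    by (rule cs_sumlin)
  also have "\<dots> = 0"
  proof (rule sum.neutral, rule ballI)
    fix S assume "S \<in> F"
    then have "finite S" "card S < m" using fW assms(5) unfolding F_def by (auto intro: finite_subset)
    then show "h S * cs (\<lambda>R. if S \<subseteq> R then 1 else 0) T xs = 0"
      using cs_ind_zero[OF assms(1,2,3,4)] by simp
  qed
  finally show ?thesis .
qed

definition pc :: "nat \<Rightarrow> 'a list \<Rightarrow> 'a set \<Rightarrow> bool" where
  "pc m xs R \<longleftrightarrow> (\<forall>i<m. card (R \<inter> {xs ! (2*i), xs ! (2*i+1)}) = 1)"

definition CC :: "'a set \<Rightarrow> nat \<Rightarrow> 'a list \<Rightarrow> 'a set set" where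
  "CC T m xs = {R. T \<subseteq> R \<and> R \<subseteq> T \<union> set xs \<and> pc m xs R}"

lemma pc_0[simp]: "pc 0 xs R" by (simp add: pc_def)

lemma all_Suc_split: "(\<forall>i<Suc m. P i) \<longleftrightarrow> P 0 \<and> (\<forall>i<m. P (Suc i))"
  by (auto simp: less_Suc_eq_0_disj)

lemma setc_img: "{g i | i. i < m} = g ` {..<m}" by auto

lemma set_Suc_split: "{g i | i. i < Suc m} = insert (g 0) {g (Suc i) | i. i < m}"
  unfolding setc_img lessThan_Suc_eq_insert_0 by (simp add: image_image)

lemma pc_Cons: "pc (Suc m) (a # b # ys) R \<longleftrightarrow> card (R \<inter> {a,b}) = 1 \<and> pc m ys R"
proof -
  have "pc (Suc m) (a # b # ys) R \<longleftrightarrow> (\<forall>i<Suc m. card (R \<inter> {(a#b#ys) ! (2*i), (a#b#ys) ! (2*i+1)}) = 1)"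
    by (simp add: pc_def)
  also have "\<dots> \<longleftrightarrow> card (R \<inter> {a,b}) = 1 \<and> (\<forall>i<m. card (R \<inter> {(a#b#ys) ! (2*Suc i), (a#b#ys) ! (2*Suc i+1)}) = 1)"
    by (simp only: all_Suc_split) simp
  also have "(\<lambda>i. (a#b#ys) ! (2*Suc i)) = (\<lambda>i. ys ! (2*i))" by auto
  also have "(\<lambda>i. (a#b#ys) ! (2*Suc i+1)) = (\<lambda>i. ys ! (2*i+1))" by auto
  finally show ?thesis by (simp add: pc_def)
qed

lemma bset_Cons: "b_set (Suc m) (a # b # ys) = insert b (b_set m ys)"
proof -
  have "b_set (Suc m) (a # b # ys) = {(a#b#ys) ! (2*i+1) | i. i < Suc m}" by (simp add: b_set_def)
  also have "\<dots> = insert ((a#b#ys) ! 1) {(a#b#ys) ! (2*Suc i+1) | i. i < m}"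
    using set_Suc_split[of "\<lambda>i. (a#b#ys)!(2*i+1)" m] by simp
  also have "\<dots> = insert b (b_set m ys)" by (simp add: b_set_def)
  finally show ?thesis .
qed

lemma bset_sub: "length ys = 2*m \<Longrightarrow> b_set m ys \<subseteq> set ys"
  by (auto simp: b_set_def)

lemma card1: "a \<noteq> b \<Longrightarrow> card (R \<inter> {a,b}) = 1 \<longleftrightarrow> (a \<in> R \<and> b \<notin> R) \<or> (a \<notin> R \<and> b \<in> R)"
  by (cases "a \<in> R"; cases "b \<in> R") (auto simp: Int_insert_right)

lemma CC_Cons:
  assumes "a \<noteq> b" "a \<notin> T" "b \<notin> T" "a \<notin> set ys" "b \<notin> set ys"
  shows "CC T (Suc m) (a # b # ys) = CC (insert a T) m ys \<union> CC (insert b T) m ys"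
proof (intro set_eqI iffI)
  fix R assume "R \<in> CC T (Suc m) (a # b # ys)"
  then have R: "T \<subseteq> R" "R \<subseteq> T \<union> set (a#b#ys)" "(a \<in> R \<and> b \<notin> R) \<or> (a \<notin> R \<and> b \<in> R)" "pc m ys R"
    unfolding CC_def pc_Cons card1[OF assms(1)] by blast+
  from R(3) show "R \<in> CC (insert a T) m ys \<union> CC (insert b T) m ys"
  proof
    assume "a \<in> R \<and> b \<notin> R"
    then have "R \<in> CC (insert a T) m ys" using R unfolding CC_def by auto
    then show ?thesis by blast
  next
    assume "a \<notin> R \<and> b \<in> R"
    then have "R \<in> CC (insert b T) m ys" using R unfolding CC_def by auto
    then show ?thesis by blast
  qed
next
  fix R assume "R \<in> CC (insert a T) m ys \<union> CC (insert b T) m ys"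
  then show "R \<in> CC T (Suc m) (a # b # ys)"
  proof
    assume R: "R \<in> CC (insert a T) m ys"
    then have "b \<notin> R" "a \<in> R" using assms unfolding CC_def by auto
    then show ?thesis using R assms unfolding CC_def pc_Cons card1[OF assms(1)] by auto
  next
    assume R: "R \<in> CC (insert b T) m ys"
    then have "a \<notin> R" "b \<in> R" using assms unfolding CC_def by auto
    then show ?thesis using R assms unfolding CC_def pc_Cons card1[OF assms(1)] by auto
  qed
qed

lemma CC_0: "CC T 0 [] = {T}" by (auto simp: CC_def)

lemma CC_fin: "finite T \<Longrightarrow> finite (CC T m xs)"
  unfolding CC_def by (rule finite_subset[of _ "Pow (T \<union> set xs)"]) auto

lemma CC_ne: "distinct xs \<Longrightarrow> length xs = 2*m \<Longrightarrow> T \<inter> set xs = {} \<Longrightarrow> CC T m xs \<noteq> {}"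
proof (induction m arbitrary: xs T)
  case 0 then show ?case by (simp add: CC_0)
next
  case (Suc m)
  obtain a b ys where xs: "xs = a # b # ys" "length ys = 2*m" using len2[OF Suc.prems(2)] by blast
  have "CC (insert a T) m ys \<noteq> {}" using Suc xs by auto
  then show ?case using Suc.prems xs CC_Cons[of a b T ys m] by auto
qed

lemma cs_sum:
  assumes "distinct xs" "length xs = 2*m" "finite T" "T \<inter> set xs = {}"
  shows "cs f T xs = (\<Sum>R\<in>CC T m xs. (-1) ^ card (R \<inter> b_set m xs) * f R)"
  using assms
proof (induction m arbitrary: xs T)
  case 0 then show ?case by (simp add: CC_0 b_set_def)
next
  case (Suc m)
  obtain a b ys where xs: "xs = a # b # ys" "length ys = 2*m" using len2[OF Suc.prems(2)] by blast
  have ab: "a \<noteq> b" "a \<notin> T" "b \<notin> T" "a \<notin> set ys" "b \<notin> set ys" "distinct ys" "T \<inter> set ys = {}"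
    using Suc.prems xs by auto
  have bs: "b_set (Suc m) xs = insert b (b_set m ys)" using xs bset_Cons by simp
  have bn: "b \<notin> b_set m ys" using bset_sub[OF xs(2)] ab by auto
  have disj: "CC (insert a T) m ys \<inter> CC (insert b T) m ys = {}"
    using ab unfolding CC_def by auto
  have s1: "(\<Sum>R\<in>CC (insert a T) m ys. (-1) ^ card (R \<inter> b_set (Suc m) xs) * f R)
      = (\<Sum>R\<in>CC (insert a T) m ys. (-1) ^ card (R \<inter> b_set m ys) * f R)"
  proof (rule sum.cong[OF refl])
    fix R assume "R \<in> CC (insert a T) m ys"
    then have "b \<notin> R" using ab unfolding CC_def by auto
    then show "(-1) ^ card (R \<inter> b_set (Suc m) xs) * f R = (-1) ^ card (R \<inter> b_set m ys) * f R"
      using bs by simp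
  qed
  have s2: "(\<Sum>R\<in>CC (insert b T) m ys. (-1) ^ card (R \<inter> b_set (Suc m) xs) * f R)
      = - (\<Sum>R\<in>CC (insert b T) m ys. (-1) ^ card (R \<inter> b_set m ys) * f R)"
    unfolding sum_negf[symmetric]
  proof (rule sum.cong[OF refl])
    fix R assume "R \<in> CC (insert b T) m ys"
    then have "b \<in> R" unfolding CC_def by auto
    then have "R \<inter> b_set (Suc m) xs = insert b (R \<inter> b_set m ys)" using bs by auto
    moreover have "finite (R \<inter> b_set m ys)" using xs(2) by (simp add: b_set_def)
    ultimately show "(-1) ^ card (R \<inter> b_set (Suc m) xs) * f R = - ((-1) ^ card (R \<inter> b_set m ys) * f R)"
      using bn by simp
  qed
  have "cs f T xs = cs f (insert a T) ys - cs f (insert b T) ys" using xs by simp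
  also have "\<dots> = (\<Sum>R\<in>CC (insert a T) m ys. (-1) ^ card (R \<inter> b_set m ys) * f R)
      - (\<Sum>R\<in>CC (insert b T) m ys. (-1) ^ card (R \<inter> b_set m ys) * f R)"
    using Suc.IH[OF ab(6) xs(2)] ab Suc.prems by auto
  also have "\<dots> = (\<Sum>R\<in>CC T (Suc m) xs. (-1) ^ card (R \<inter> b_set (Suc m) xs) * f R)"
    unfolding xs(1) CC_Cons[OF ab(1-5)]
    by (subst sum.union_disjoint) (use Suc.prems CC_fin[of "insert a T"] CC_fin[of "insert b T"] disj s1 s2 xs in auto)
  finally show ?case .
qed

lemma pc_card:
  assumes "distinct xs" "length xs = 2*m" "pc m xs R"
  shows "card (R \<inter> set xs) = m"
  using assms
proof (induction m arbitrary: xs)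
  case 0 then show ?case by simp
next
  case (Suc m)
  obtain a b ys where xs: "xs = a # b # ys" "length ys = 2*m" using len2[OF Suc.prems(2)] by blast
  have p: "pc (Suc m) (a#b#ys) R" using Suc.prems(3) xs by simp
  have c1: "card (R \<inter> {a,b}) = 1" and p2: "pc m ys R" using pc_Cons[of m a b ys R] p by simp_all
  have dy: "distinct ys" "a \<notin> set ys" "b \<notin> set ys" using Suc.prems(1) xs(1) by auto
  have c2: "card (R \<inter> set ys) = m" using Suc.IH[OF dy(1) xs(2) p2] .
  have e: "R \<inter> set xs = (R \<inter> {a,b}) \<union> (R \<inter> set ys)" using xs by auto
  have d: "(R \<inter> {a,b}) \<inter> (R \<inter> set ys) = {}" using dy by auto
  have "card (R \<inter> set xs) = card (R \<inter> {a,b}) + card (R \<inter> set ys)"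
    unfolding e by (rule card_Un_disjoint) (use d in auto)
  then show ?case using c1 c2 by simp
qed

lemma compat_CC:
  assumes "xs \<in> perms V (2*k)" "finite V"
  shows "compat_sets V k k xs = CC {} k xs"
proof -
  have d: "distinct xs" "length xs = 2*k" "set xs \<subseteq> V" using assms by (auto simp: perms_def)
  show ?thesis
  proof (intro set_eqI iffI)
    fix R assume R: "R \<in> compat_sets V k k xs"
    then have p: "pc k xs R" "card R = k" "R \<subseteq> V" by (auto simp: compat_sets_def pc_def)
    have "card (R \<inter> set xs) = card R" using pc_card[OF d(1,2) p(1)] p by simp
    then have "R \<inter> set xs = R" using p assms(2)
      by (metis card_subset_eq finite_subset inf_le1)
    then show "R \<in> CC {} k xs" using p by (auto simp: CC_def)
  next
    fix R assume R: "R \<in> CC {} k xs"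
    then have p: "pc k xs R" "R \<subseteq> set xs" by (auto simp: CC_def)
    then have "card R = k" using pc_card[OF d(1,2) p(1)] by (simp add: Int_absorb2)
    then show "R \<in> compat_sets V k k xs" using p d unfolding compat_sets_def pc_def by auto
  qed
qed

lemma card_ext:
  assumes "finite R" "U \<subseteq> R"
  shows "card {S. U \<subseteq> S \<and> S \<subseteq> R \<and> card S = Suc (card U)} = card R - card U"
proof -
  have fU: "finite U" using assms finite_subset by blast
  have "{S. U \<subseteq> S \<and> S \<subseteq> R \<and> card S = Suc (card U)} = (\<lambda>x. insert x U) ` (R - U)"
  proof (intro set_eqI iffI)
    fix S assume S: "S \<in> {S. U \<subseteq> S \<and> S \<subseteq> R \<and> card S = Suc (card U)}"
    then have "finite S" using assms finite_subset by auto
    then have "card (S - U) = 1" using S fU by (simp add: card_Diff_subset)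
    then obtain x where x: "S - U = {x}" by (rule card_1_singletonE)
    then have "S = insert x U" "x \<in> R - U" using S by auto
    then show "S \<in> (\<lambda>x. insert x U) ` (R - U)" by blast
  next
    fix S assume "S \<in> (\<lambda>x. insert x U) ` (R - U)"
    then obtain x where "x \<in> R - U" "S = insert x U" by blast
    then show "S \<in> {S. U \<subseteq> S \<and> S \<subseteq> R \<and> card S = Suc (card U)}"
      using assms fU by auto
  qed
  moreover have "inj_on (\<lambda>x. insert x U) (R - U)" by (rule inj_onI) auto
  ultimately show ?thesis using assms fU by (simp add: card_image card_Diff_subset)
qed

lemma dc:
  assumes "finite R"
  shows "(\<Sum>S\<in>{S. S \<subseteq> R \<and> card S = Suc d}. \<Sum>U\<in>{U. U \<subseteq> S \<and> card U = d}. \<phi> U)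
       = real (card R - d) * (\<Sum>U\<in>{U. U \<subseteq> R \<and> card U = d}. \<phi> U)"
proof -
  define A where "A = {S. S \<subseteq> R \<and> card S = Suc d}"
  define B where "B = {U. U \<subseteq> R \<and> card U = d}"
  have fA: "finite A" unfolding A_def using assms by (auto intro: finite_subset[of _ "Pow R"])
  have fB: "finite B" unfolding B_def using assms by (auto intro: finite_subset[of _ "Pow R"])
  have "(\<Sum>S\<in>A. \<Sum>U\<in>{U. U \<subseteq> S \<and> card U = d}. \<phi> U) = (\<Sum>S\<in>A. \<Sum>U\<in>{U. U \<in> B \<and> U \<subseteq> S}. \<phi> U)"
  proof (rule sum.cong[OF refl])
    fix S assume "S \<in> A"
    then have "{U. U \<subseteq> S \<and> card U = d} = {U. U \<in> B \<and> U \<subseteq> S}" unfolding A_def B_def by auto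
    then show "(\<Sum>U\<in>{U. U \<subseteq> S \<and> card U = d}. \<phi> U) = (\<Sum>U\<in>{U. U \<in> B \<and> U \<subseteq> S}. \<phi> U)" by simp
  qed
  also have "\<dots> = (\<Sum>U\<in>B. \<Sum>S\<in>{S. S \<in> A \<and> U \<subseteq> S}. \<phi> U)"
    by (rule sum.swap_restrict[OF fA fB])
  also have "\<dots> = (\<Sum>U\<in>B. real (card R - d) * \<phi> U)"
  proof (rule sum.cong[OF refl])
    fix U assume U: "U \<in> B"
    then have "{S. S \<in> A \<and> U \<subseteq> S} = {S. U \<subseteq> S \<and> S \<subseteq> R \<and> card S = Suc (card U)}"
      unfolding A_def B_def by auto
    then have "card {S. S \<in> A \<and> U \<subseteq> S} = card R - d" using card_ext[OF assms, of U] U unfolding B_def by simp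
    then show "(\<Sum>S\<in>{S. S \<in> A \<and> U \<subseteq> S}. \<phi> U) = real (card R - d) * \<phi> U" by simp
  qed
  also have "\<dots> = real (card R - d) * (\<Sum>U\<in>B. \<phi> U)" by (simp add: sum_distrib_left)
  finally show ?thesis unfolding A_def B_def .
qed

definition upimg :: "nat \<Rightarrow> ('a set \<Rightarrow> real) \<Rightarrow> 'a set \<Rightarrow> real" where
  "upimg j h R = (if j = 0 then 0 else (\<Sum>S\<in>{S. S \<subseteq> R \<and> card S = j - 1}. h S))"

definition cubecond :: "'a set \<Rightarrow> nat \<Rightarrow> nat \<Rightarrow> ('a set \<Rightarrow> real) \<Rightarrow> bool" where
  "cubecond V k j f \<longleftrightarrow> (\<forall>xs T. distinct xs \<longrightarrow> length xs = 2*j \<longrightarrow> set xs \<subseteq> V \<longrightarrow> T \<subseteq> V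
      \<longrightarrow> T \<inter> set xs = {} \<longrightarrow> card T + j = k \<longrightarrow> cs f T xs = 0)"

lemma G:
  assumes "finite V" "j \<le> k + 1" "k + j \<le> card V" "cubecond V k j f"
  shows "\<exists>h. \<forall>R. R \<subseteq> V \<longrightarrow> card R = k \<longrightarrow> f R = upimg j h R"
  using assms
proof (induction "card V" arbitrary: V k j f rule: less_induct)
  case less
  note fV = less.prems(1) and jk = less.prems(2) and kjV = less.prems(3) and cc = less.prems(4)
  consider "j = 0" | "j = k + 1" | "1 \<le> j" "j \<le> k" using jk by linarith
  then show ?case
  proof cases
    case 1
    have "f R = 0" if "R \<subseteq> V" "card R = k" for R
      using cc that 1 unfolding cubecond_def by (metis cs.simps(2) add.right_neutral distinct.simps(1) empty_subsetI inf_bot_right list.size(3) mult_0_right set_empty)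
    then show ?thesis using 1 by (auto simp: upimg_def)
  next
    case 2
    have "f R = upimg j f R" if "R \<subseteq> V" "card R = k" for R
    proof -
      have fR: "finite R" using that fV finite_subset by blast
      have "{S. S \<subseteq> R \<and> card S = k} = {R}" using that fR card_subset_eq[of R] by auto
      then show ?thesis using 2 by (simp add: upimg_def)
    qed
    then show ?thesis by blast
  next
    case 3
    then have "card V \<ge> 2" using kjV by linarith
    then obtain v where vV: "v \<in> V" by fastforce
    define V' where "V' = V - {v}"
    have fV': "finite V'" and cV': "card V' = card V - 1" and V'V: "V' \<subseteq> V" and vV': "v \<notin> V'"
      using fV vV unfolding V'_def by auto
    have k1: "k \<ge> 1" using 3 by simp
    have cVlt: "card V' < card V" using cV' \<open>card V \<ge> 2\<close> by simp
    define f1 where "f1 = (\<lambda>X. f (insert v X))"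
    have cc1: "cubecond V' (k-1) j f1"
      unfolding cubecond_def
    proof (intro allI impI)
      fix xs T assume a: "distinct xs" "length xs = 2*j" "set xs \<subseteq> V'" "T \<subseteq> V'" "T \<inter> set xs = {}" "card T + j = k - 1"
      have fT: "finite T" using a(4) fV' finite_subset by blast
      have vT: "v \<notin> T" using a(4) vV' by blast
      have vx: "v \<notin> set xs" using a(3) vV' by blast
      have "card (insert v T) + j = k" using a(6) fT vT 3 by simp
      moreover have "insert v T \<subseteq> V" "set xs \<subseteq> V" "insert v T \<inter> set xs = {}" using a vV V'V vx by auto
      ultimately have "cs f (insert v T) xs = 0"
        using cc[unfolded cubecond_def, rule_format, of xs "insert v T"] a(1,2) by blast
      then show "cs f1 T xs = 0" unfolding f1_def by (simp add: cs_shift)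
    qed
    obtain h' where h': "\<forall>T. T \<subseteq> V' \<longrightarrow> card T = k - 1 \<longrightarrow> f1 T = upimg j h' T"
    proof -
      have "k - 1 + j \<le> card V'" using cV' kjV 3 by linarith
      then show ?thesis using less.hyps[OF cVlt fV' _ _ cc1] 3 that by auto
    qed
    define h1 where "h1 = (\<lambda>S. if v \<in> S then 0 else h' S)"
    define g where "g = (\<lambda>R. f R - upimg j h1 R)"
    have gv: "g R = 0" if R: "R \<subseteq> V" "card R = k" "v \<in> R" for R
    proof -
      define T where "T = R - {v}"
      have fR: "finite R" using R fV finite_subset by blast
      have T: "T \<subseteq> V'" "card T = k - 1" "R = insert v T" "v \<notin> T" "finite T" "T \<subseteq> R"
        using R fR unfolding T_def V'_def by auto
      have fin: "finite {S. S \<subseteq> R \<and> card S = j - 1}" using fR by (auto intro: finite_subset[of _ "Pow R"])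
      have "f R = upimg j h' T" using h' T unfolding f1_def by auto
      also have "\<dots> = (\<Sum>S\<in>{S. S \<subseteq> T \<and> card S = j-1}. h' S)" using 3 by (simp add: upimg_def)
      also have "\<dots> = (\<Sum>S\<in>{S. S \<subseteq> T \<and> card S = j-1}. h1 S)"
        by (rule sum.cong[OF refl]) (use T(4) in \<open>auto simp: h1_def\<close>)
      also have "\<dots> = (\<Sum>S\<in>{S. S \<subseteq> R \<and> card S = j-1}. h1 S)"
      proof (rule sum.mono_neutral_left[OF fin])
        show "{S. S \<subseteq> T \<and> card S = j - 1} \<subseteq> {S. S \<subseteq> R \<and> card S = j - 1}" using T(6) by auto
        show "\<forall>i\<in>{S. S \<subseteq> R \<and> card S = j - 1} - {S. S \<subseteq> T \<and> card S = j - 1}. h1 i = 0"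
          using T(3) unfolding h1_def by auto
      qed
      also have "\<dots> = upimg j h1 R" using 3 by (simp add: upimg_def)
      finally show "g R = 0" by (simp add: g_def)
    qed
    have gc: "cubecond V k j g"
      unfolding cubecond_def
    proof (intro allI impI)
      fix xs T assume a: "distinct xs" "length xs = 2*j" "set xs \<subseteq> V" "T \<subseteq> V" "T \<inter> set xs = {}" "card T + j = k"
      have fT: "finite T" using a(4) fV finite_subset by blast
      have e1: "cs g T xs = cs f T xs - cs (upimg j h1) T xs" unfolding g_def by (rule cs_diff)
      have e2: "cs f T xs = 0" using cc[unfolded cubecond_def, rule_format, OF a] .
      have "upimg j h1 = (\<lambda>R. \<Sum>S\<in>{S. S \<subseteq> R \<and> card S = j-1}. h1 S)" using 3 by (auto simp: upimg_def)
      moreover have "cs (\<lambda>R. \<Sum>S\<in>{S. S \<subseteq> R \<and> card S = j-1}. h1 S) T xs = 0"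
        by (rule up_vanish[OF a(1) a(2) fT a(5)]) (use 3 in simp)
      ultimately have e3: "cs (upimg j h1) T xs = 0" by simp
      show "cs g T xs = 0" using e1 e2 e3 by simp
    qed
    have gc0: "cubecond V' k (j-1) g"
      unfolding cubecond_def
    proof (intro allI impI)
      fix xs T assume a: "distinct xs" "length xs = 2*(j-1)" "set xs \<subseteq> V'" "T \<subseteq> V'" "T \<inter> set xs = {}" "card T + (j-1) = k"
      have fT: "finite T" using a(4) fV' finite_subset by blast
      have "T \<noteq> {}" using a(6) 3 by auto
      then obtain x where xT: "x \<in> T" by blast
      define T0 where "T0 = T - {x}"
      have T0: "T = insert x T0" "x \<notin> T0" "finite T0" "card T0 + j = k" "T0 \<subseteq> V" "v \<notin> T0"
        using xT fT a(4,6) 3 V'V vV' unfolding T0_def by (auto simp: card_Diff_singleton)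
      have vx: "v \<notin> set xs" "x \<notin> set xs" "x \<noteq> v" "x \<in> V" using a xT vV' V'V by auto
      have d': "distinct (x # v # xs)" using a(1) vx by auto
      have l': "length (x # v # xs) = 2 * j" using a(2) 3 by simp
      have s': "set (x # v # xs) \<subseteq> V" using a(3) vx vV V'V by auto
      have i': "T0 \<inter> set (x # v # xs) = {}" using T0 a(5) xT vx unfolding T0_def by auto
      have z1: "cs g T0 (x # v # xs) = 0"
        using gc[unfolded cubecond_def, rule_format, OF d' l' s' T0(5) i' T0(4)] .
      have "cs g (insert v T0) xs = cs (\<lambda>_. 0) (insert v T0) xs"
      proof (rule cs_cong[OF a(1) a(2)])
        show "finite (insert v T0)" using T0 by simp
        show "insert v T0 \<inter> set xs = {}" using T0 a(5) vx unfolding T0_def by auto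
        fix Y assume Y: "insert v T0 \<subseteq> Y" "Y \<subseteq> insert v T0 \<union> set xs" "card Y = card (insert v T0) + (j - 1)"
        show "g Y = 0"
        proof (rule gv)
          show "Y \<subseteq> V" using Y(2) T0(5) vV a(3) V'V by auto
          show "card Y = k" using Y(3) T0 3 by simp
          show "v \<in> Y" using Y(1) by auto
        qed
      qed
      then have z2: "cs g (insert v T0) xs = 0" by (simp add: cs_zero)
      show "cs g T xs = 0" using z1 z2 T0(1) by simp
    qed
    obtain h2 where h2: "\<forall>R. R \<subseteq> V' \<longrightarrow> card R = k \<longrightarrow> g R = upimg (j-1) h2 R"
    proof -
      have "k + (j - 1) \<le> card V'" using cV' kjV 3 by linarith
      moreover have "j - 1 \<le> k + 1" using 3 by simp
      ultimately show ?thesis using less.hyps[OF cVlt fV' _ _ gc0] that by blast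
    qed
    show ?thesis
    proof (cases "j = 1")
      case True
      have "f R = upimg j h1 R" if R: "R \<subseteq> V" "card R = k" for R
      proof (cases "v \<in> R")
        case True then show ?thesis using gv[OF R True] by (simp add: g_def)
      next
        case False then have "R \<subseteq> V'" using R unfolding V'_def by auto
        then have "g R = 0" using h2 R \<open>j = 1\<close> by (simp add: upimg_def)
        then show ?thesis by (simp add: g_def)
      qed
      then show ?thesis by blast
    next
      case False
      then have j2: "j \<ge> 2" using 3 by simp
      define d where "d = j - 2"
      have jd: "j = d + 2" "j - 1 = Suc d" using j2 d_def by auto
      have kd: "k - d \<ge> 2" using 3 jd by auto
      define \<beta> where "\<beta> = 1 / real (k - d)"
      define \<alpha> where "\<alpha> = - real (k - 1 - d) / real (k - d)"
      define h3 where "h3 = (\<lambda>S. if v \<in> S then \<alpha> * h2 (S - {v}) else \<beta> * (\<Sum>U\<in>{U. U \<subseteq> S \<and> card U = d}. h2 U))"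
      have g3: "g R = (\<Sum>S\<in>{S. S \<subseteq> R \<and> card S = Suc d}. h3 S)" if R: "R \<subseteq> V" "card R = k" for R
      proof (cases "v \<in> R")
        case False
        then have RV': "R \<subseteq> V'" using R unfolding V'_def by auto
        have fR: "finite R" using R fV finite_subset by blast
        have "(\<Sum>S\<in>{S. S \<subseteq> R \<and> card S = Suc d}. h3 S) = (\<Sum>S\<in>{S. S \<subseteq> R \<and> card S = Suc d}. \<beta> * (\<Sum>U\<in>{U. U \<subseteq> S \<and> card U = d}. h2 U))"
          by (rule sum.cong[OF refl]) (use False in \<open>auto simp: h3_def\<close>)
        also have "\<dots> = \<beta> * (\<Sum>S\<in>{S. S \<subseteq> R \<and> card S = Suc d}. \<Sum>U\<in>{U. U \<subseteq> S \<and> card U = d}. h2 U)"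
          by (simp add: sum_distrib_left)
        also have "\<dots> = \<beta> * (real (k - d) * (\<Sum>U\<in>{U. U \<subseteq> R \<and> card U = d}. h2 U))"
          using dc[OF fR, where d=d and \<phi>=h2] R by simp
        also have "\<dots> = (\<Sum>U\<in>{U. U \<subseteq> R \<and> card U = d}. h2 U)" using kd by (simp add: \<beta>_def)
        also have "\<dots> = g R" using h2 RV' R jd by (simp add: upimg_def)
        finally show ?thesis by simp
      next
        case True
        define T where "T = R - {v}"
        have fR: "finite R" using R fV finite_subset by blast
        have T: "R = insert v T" "v \<notin> T" "finite T" "card T = k - 1" "T \<subseteq> V'"
          using True R fR unfolding T_def V'_def by auto
        define A where "A = {S. S \<subseteq> T \<and> card S = Suc d}"
        define B where "B = {U. U \<subseteq> T \<and> card U = d}"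
        have fA: "finite A" unfolding A_def using T(3) by (auto intro: finite_subset[of _ "Pow T"])
        have fB: "finite B" unfolding B_def using T(3) by (auto intro: finite_subset[of _ "Pow T"])
        have split: "{S. S \<subseteq> R \<and> card S = Suc d} = A \<union> insert v ` B"
        proof (intro set_eqI iffI)
          fix S assume S: "S \<in> {S. S \<subseteq> R \<and> card S = Suc d}"
          then have fS: "finite S" using fR finite_subset by blast
          show "S \<in> A \<union> insert v ` B"
          proof (cases "v \<in> S")
            case True
            then have "S = insert v (S - {v})" "S - {v} \<in> B"
              using S fS T(1) unfolding B_def by (auto simp: card_Diff_singleton)
            then show ?thesis by blast
          next
            case False
            then show ?thesis using S T(1) unfolding A_def by auto
          qed
        next
          fix S assume "S \<in> A \<union> insert v ` B"
          then show "S \<in> {S. S \<subseteq> R \<and> card S = Suc d}"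
          proof
            assume "S \<in> A" then show ?thesis using T(1) unfolding A_def by auto
          next
            assume "S \<in> insert v ` B"
            then obtain U where U: "U \<in> B" "S = insert v U" by blast
            then have "finite U" "v \<notin> U" using T(2,3) finite_subset unfolding B_def by auto
            then show ?thesis using U T(1) unfolding B_def by auto
          qed
        qed
        have disj: "A \<inter> insert v ` B = {}" using T(2) unfolding A_def by auto
        have inj: "inj_on (insert v) B"
        proof (rule inj_onI)
          fix U U' assume a: "U \<in> B" "U' \<in> B" "insert v U = insert v U'"
          then have "v \<notin> U" "v \<notin> U'" using T(2) unfolding B_def by auto
          then show "U = U'" using a(3) by (metis Diff_insert_absorb)
        qed
        have s1: "(\<Sum>S\<in>A. h3 S) = \<beta> * (real (k - 1 - d) * (\<Sum>U\<in>B. h2 U))"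
        proof -
          have "(\<Sum>S\<in>A. h3 S) = (\<Sum>S\<in>A. \<beta> * (\<Sum>U\<in>{U. U \<subseteq> S \<and> card U = d}. h2 U))"
            by (rule sum.cong[OF refl]) (use T(2) in \<open>auto simp: h3_def A_def\<close>)
          also have "\<dots> = \<beta> * (\<Sum>S\<in>A. \<Sum>U\<in>{U. U \<subseteq> S \<and> card U = d}. h2 U)"
            by (simp add: sum_distrib_left)
          also have "\<dots> = \<beta> * (real (k - 1 - d) * (\<Sum>U\<in>B. h2 U))"
            using dc[OF T(3), where d=d and \<phi>=h2] T(4) unfolding A_def B_def by simp
          finally show ?thesis .
        qed
        have s2: "(\<Sum>S\<in>insert v ` B. h3 S) = \<alpha> * (\<Sum>U\<in>B. h2 U)"
        proof -
          have "(\<Sum>S\<in>insert v ` B. h3 S) = (\<Sum>U\<in>B. h3 (insert v U))" by (simp add: sum.reindex[OF inj])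
          also have "\<dots> = (\<Sum>U\<in>B. \<alpha> * h2 U)"
          proof (rule sum.cong[OF refl])
            fix U assume "U \<in> B"
            then have "v \<notin> U" using T(2) unfolding B_def by auto
            then show "h3 (insert v U) = \<alpha> * h2 U" unfolding h3_def by simp
          qed
          finally show ?thesis by (simp add: sum_distrib_left)
        qed
        have "(\<Sum>S\<in>{S. S \<subseteq> R \<and> card S = Suc d}. h3 S) = (\<Sum>S\<in>A. h3 S) + (\<Sum>S\<in>insert v ` B. h3 S)"
          unfolding split by (rule sum.union_disjoint[OF fA _ disj]) (use fB in simp)
        also have "\<dots> = (\<beta> * real (k - 1 - d) + \<alpha>) * (\<Sum>U\<in>B. h2 U)"
          unfolding s1 s2 by (simp add: algebra_simps)
        also have "\<beta> * real (k - 1 - d) + \<alpha> = 0" unfolding \<alpha>_def \<beta>_def by simp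
        finally show ?thesis using gv[OF R True] by simp
      qed
      have "f R = upimg j (\<lambda>S. h1 S + h3 S) R" if R: "R \<subseteq> V" "card R = k" for R
      proof -
        have "upimg j (\<lambda>S. h1 S + h3 S) R = upimg j h1 R + (\<Sum>S\<in>{S. S \<subseteq> R \<and> card S = Suc d}. h3 S)"
          using jd by (simp add: upimg_def sum.distrib)
        then show ?thesis using g3[OF R] by (simp add: g_def)
      qed
      then show ?thesis by blast
    qed
  qed
qed

theorem lemma2p7:
  fixes n k :: nat and f :: "nat set \<Rightarrow> real"
  assumes "k \<ge> 1" and "n \<ge> 2 * k"
  shows "level_weight {1..n} k k f = 0 \<longleftrightarrow>
    (\<exists>h :: nat set \<Rightarrow> real. \<forall>R. R \<subseteq> {1..n} \<and> card R = k \<longrightarrow>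
        f R = (\<Sum>S\<in>{S. S \<subseteq> R \<and> card S = k - 1}. h S))"
proof -
  have fV: "finite {1..n}" by simp
  have fP: "finite (perms {1..n} (2*k))"
    by (rule finite_subset[of _ "{xs. set xs \<subseteq> {1..n} \<and> length xs = 2*k}"])
       (auto simp: perms_def intro: finite_lists_length_eq)
  have pd1: "distinct xs" if "xs \<in> perms {1..n} (2*k)" for xs
    using that by (auto simp: perms_def)
  have pd2: "length xs = 2*k" if "xs \<in> perms {1..n} (2*k)" for xs
    using that by (auto simp: perms_def)
  have pd3: "set xs \<subseteq> {1..n}" if "xs \<in> perms {1..n} (2*k)" for xs
    using that by (auto simp: perms_def)
  have key: "inner_exp {1..n} k k f xs = cs f {} xs / real (card (CC {} k xs))"
    if xs: "xs \<in> perms {1..n} (2*k)" for xs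
    unfolding inner_exp_def compat_CC[OF xs fV] using cs_sum[OF pd1[OF xs] pd2[OF xs], of "{}" f] by simp
  have cpos: "card (CC {} k xs) > 0" if xs: "xs \<in> perms {1..n} (2*k)" for xs
    using CC_fin[of "{}" k xs] CC_ne[OF pd1[OF xs] pd2[OF xs], of "{}"] by (simp add: card_gt_0_iff)
  show ?thesis
  proof
    assume lw: "level_weight {1..n} k k f = 0"
    have "[1..<2*k+1] \<in> perms {1..n} (2*k)" using assms by (auto simp: perms_def)
    then have cP: "card (perms {1..n} (2*k)) > 0" using fP by (auto simp: card_gt_0_iff)
    have "(\<Sum>xs\<in>perms {1..n} (2*k). (inner_exp {1..n} k k f xs)^2) / real (card (perms {1..n} (2*k))) = 0"
      using lw unfolding level_weight_def by simp
    then have "(\<Sum>xs\<in>perms {1..n} (2*k). (inner_exp {1..n} k k f xs)^2) = 0" using cP by simp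
    then have z: "\<forall>xs\<in>perms {1..n} (2*k). (inner_exp {1..n} k k f xs)^2 = 0"
      using sum_nonneg_eq_0_iff[OF fP, of "\<lambda>xs. (inner_exp {1..n} k k f xs)^2"] by simp
    have cz: "cs f {} xs = 0" if xs: "xs \<in> perms {1..n} (2*k)" for xs
      using z xs key[OF xs] cpos[OF xs] by simp
    have "cubecond {1..n} k k f"
      unfolding cubecond_def
    proof (intro allI impI)
      fix xs and T :: "nat set"
      assume a: "distinct xs" "length xs = 2*k" "set xs \<subseteq> {1..n}" "T \<subseteq> {1..n}" "T \<inter> set xs = {}" "card T + k = k"
      have fT: "finite T" using a(4) fV finite_subset by blast
      have "card T = 0" using a(6) by simp
      then have "T = {}" using fT by simp
      moreover have "xs \<in> perms {1..n} (2*k)" using a by (simp add: perms_def)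
      ultimately show "cs f T xs = 0" using cz by simp
    qed
    then obtain h where h: "\<forall>R. R \<subseteq> {1..n} \<longrightarrow> card R = k \<longrightarrow> f R = upimg k h R"
      using G[OF fV, of k k f] assms by auto
    show "\<exists>h :: nat set \<Rightarrow> real. \<forall>R. R \<subseteq> {1..n} \<and> card R = k \<longrightarrow>
        f R = (\<Sum>S\<in>{S. S \<subseteq> R \<and> card S = k - 1}. h S)"
      using h assms by (auto simp: upimg_def)
  next
    assume "\<exists>h :: nat set \<Rightarrow> real. \<forall>R. R \<subseteq> {1..n} \<and> card R = k \<longrightarrow>
        f R = (\<Sum>S\<in>{S. S \<subseteq> R \<and> card S = k - 1}. h S)"
    then obtain h :: "nat set \<Rightarrow> real" where h: "\<And>R. R \<subseteq> {1..n} \<Longrightarrow> card R = k \<Longrightarrow>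
        f R = (\<Sum>S\<in>{S. S \<subseteq> R \<and> card S = k - 1}. h S)" by blast
    have "inner_exp {1..n} k k f xs = 0" if xs: "xs \<in> perms {1..n} (2*k)" for xs
    proof -
      have "cs f {} xs = cs (\<lambda>R. \<Sum>S\<in>{S. S \<subseteq> R \<and> card S = k - 1}. h S) {} xs"
        by (rule cs_cong[OF pd1[OF xs] pd2[OF xs]]) (use pd1[OF xs] pd2[OF xs] pd3[OF xs] h in auto)
      also have "\<dots> = 0" by (rule up_vanish[OF pd1[OF xs] pd2[OF xs]]) (use assms in auto)
      finally show ?thesis using key[OF xs] by simp
    qed
    then show "level_weight {1..n} k k f = 0" unfolding level_weight_def by simp
  qed
qed

end
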